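(* Let $N,d\ge1$, $\lambda,\tau>0$ with $\lambda\tau\le\frac12$, and let $\psi:[0,\infty)\to(0,\infty)$ be positive, nonincreasing, differentiable with $\psi(r)\le1$ for all $r\ge0$. Let $(x_i,v_i)_{i=1}^N$ solve $$\dot x_i(t)=v_i(t),\qquad \dot v_i(t)=\frac{\lambda}{N}\sum_{j=1}^N\psi(|x_i(t-\tau)-x_j(t-\tau)|)\,(v_j(t-\tau)-v_i(t-\tau)),\qquad t>0,$$ with initial data $(x_i,v_i)=(x_i^0,v_i^0)$ on $[-\tau,0]$, $(x_i^0,v_i^0)\in C([-\tau,0];\mathbb{R}^{2d})\cap C^1((-\tau,0);\mathbb{R}^{2d})$. Define for $t\ge\tau$ $$\mathcal L(t):=V(t)+4\tau\lambda^3\int_{t-\tau}^t\int_\theta^t\widetilde D(s)\,ds\,d\theta.$$ Then $\mathcal L(t)\le\mathcal L(\tau)$ for all $t\ge\tau$.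
   Context: $V(t):=\frac12\sum_{i,j=1}^N|v_i(t)-v_j(t)|^2$, $D(t):=\frac12\sum_{i,j=1}^N\psi(|x_i(t)-x_j(t)|)\,|v_j(t)-v_i(t)|^2$, and $\widetilde D(t):=D(t-\tau)$. *)

theory Defs
  imports "HOL-Analysis.Analysis"
begin

definition Vfun :: "nat \<Rightarrow> (nat \<Rightarrow> real \<Rightarrow> real^'d) \<Rightarrow> real \<Rightarrow> real" where
  "Vfun N v t = (1/2) * (\<Sum>i<N. \<Sum>j<N. (norm (v i t - v j t))\<^sup>2)"

definition Dfun :: "nat \<Rightarrow> (real \<Rightarrow> real) \<Rightarrow> (nat \<Rightarrow> real \<Rightarrow> real^'d)
    \<Rightarrow> (nat \<Rightarrow> real \<Rightarrow> real^'d) \<Rightarrow> real \<Rightarrow> real" where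
  "Dfun N \<psi> x v t = (1/2) * (\<Sum>i<N. \<Sum>j<N. \<psi> (norm (x i t - x j t)) * (norm (v j t - v i t))\<^sup>2)"

definition Dtilde :: "nat \<Rightarrow> real \<Rightarrow> (real \<Rightarrow> real) \<Rightarrow> (nat \<Rightarrow> real \<Rightarrow> real^'d)
    \<Rightarrow> (nat \<Rightarrow> real \<Rightarrow> real^'d) \<Rightarrow> real \<Rightarrow> real" where
  "Dtilde N \<tau> \<psi> x v t = Dfun N \<psi> x v (t - \<tau>)"

definition Lfun :: "nat \<Rightarrow> real \<Rightarrow> real \<Rightarrow> (real \<Rightarrow> real) \<Rightarrow> (nat \<Rightarrow> real \<Rightarrow> real^'d)
    \<Rightarrow> (nat \<Rightarrow> real \<Rightarrow> real^'d) \<Rightarrow> real \<Rightarrow> real" where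
  "Lfun N lam \<tau> \<psi> x v t = Vfun N v t + 4 * \<tau> * lam ^ 3 *
     integral {t - \<tau>..t} (\<lambda>\<theta>. integral {\<theta>..t} (\<lambda>s. Dtilde N \<tau> \<psi> x v s))"

end

theory Submission imports Defs begin

lemma int_sq_bound:
  fixes F :: "real \<Rightarrow> 'a::euclidean_space"
  assumes ab: "a < b" and FA: "(F has_integral A) {a..b}"
    and int2: "(\<lambda>s. norm (F s)^2) integrable_on {a..b}"
  shows "norm A ^ 2 \<le> (b - a) * integral {a..b} (\<lambda>s. norm (F s)^2)"
proof -
  define c where "c = (1/(b-a)) *\<^sub>R A"
  have pt: "2 * inner c (F s) - norm c ^2 \<le> norm (F s)^2" for s
  proof -
    have "0 \<le> norm (F s - c)^2" by simp
    also have "\<dots> = norm (F s)^2 - 2 * inner c (F s) + norm c ^2"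
      by (simp add: power2_norm_eq_inner inner_diff inner_commute)
    finally show ?thesis by simp
  qed
  have h0: "((\<lambda>s. inner c (F s)) has_integral inner c A) {a..b}"
    using has_integral_linear[OF FA bounded_linear_inner_right[of c]] by (simp add: o_def)
  have h1: "((\<lambda>s. 2 * inner c (F s) - norm c ^2) has_integral (2 * inner c A - norm c^2 * (b-a))) {a..b}"
    using has_integral_diff[OF has_integral_mult_right[OF h0, of 2] has_integral_const_real[of "norm c ^2" a b]] ab
    by (simp add: mult.commute)
  have le: "2 * inner c A - norm c^2 * (b-a) \<le> integral {a..b} (\<lambda>s. norm (F s)^2)"
    using has_integral_le[OF h1 integrable_integral[OF int2]] pt by blast
  have i1: "inner c A = norm A^2/(b-a)" by (simp add: c_def power2_norm_eq_inner)
  have i2: "norm c^2 = norm A^2/(b-a)^2" using ab by (simp add: c_def power_divide power_mult_distrib)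
  have "2 * inner c A - norm c^2 * (b-a) = norm A ^2 / (b - a)"
  proof -
    have g: "\<And>d X::real. d>0 \<Longrightarrow> 2*(X/d) - X/d^2*d = X/d" by (simp add: power2_eq_square)
    show ?thesis unfolding i1 i2 using g[of "b-a" "norm A^2"] ab by simp
  qed
  with le have "norm A ^2 / (b - a) \<le> integral {a..b} (\<lambda>s. norm (F s)^2)" by simp
  with ab show ?thesis by (simp add: pos_divide_le_eq mult.commute)
qed

lemma F_bound:
  fixes q :: "nat \<Rightarrow> 'a::real_inner" and ps :: "nat \<Rightarrow> nat \<Rightarrow> real"
  assumes N: "N \<ge> 1" and p0: "\<And>i k. 0 \<le> ps i k" and p1: "\<And>i k. ps i k \<le> 1"
  shows "(\<Sum>i<N. norm ((lam / real N) *\<^sub>R (\<Sum>k<N. ps i k *\<^sub>R (q k - q i)))^2)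
     \<le> (lam^2 / real N) * (\<Sum>i<N. \<Sum>k<N. ps i k * norm (q k - q i)^2)"
proof -
  have per: "norm ((lam / real N) *\<^sub>R (\<Sum>k<N. ps i k *\<^sub>R (q k - q i)))^2
     \<le> (lam^2 / real N) * (\<Sum>k<N. ps i k * norm (q k - q i)^2)" for i
  proof -
    have a: "norm (\<Sum>k<N. ps i k *\<^sub>R (q k - q i)) \<le> (\<Sum>k<N. ps i k * norm (q k - q i))"
      by (rule order_trans[OF norm_sum]) (simp add: p0)
    have b: "(\<Sum>k<N. ps i k * norm (q k - q i))^2 \<le> real N * (\<Sum>k<N. (ps i k * norm (q k - q i))^2)"
      using Cauchy_Schwarz_ineq_sum[of "\<lambda>_. 1::real" "\<lambda>k. ps i k * norm (q k - q i)" "{..<N}"] by simp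
    have c: "(\<Sum>k<N. (ps i k * norm (q k - q i))^2) \<le> (\<Sum>k<N. ps i k * norm (q k - q i)^2)"
    proof (rule sum_mono)
      fix k
      have "ps i k ^2 \<le> ps i k" using p0[of i k] p1[of i k] using mult_left_mono[of "ps i k" 1 "ps i k"] by (simp add: power2_eq_square)
      then show "(ps i k * norm (q k - q i))^2 \<le> ps i k * norm (q k - q i)^2"
        by (simp add: power_mult_distrib mult_right_mono)
    qed
    have "norm (\<Sum>k<N. ps i k *\<^sub>R (q k - q i))^2 \<le> (\<Sum>k<N. ps i k * norm (q k - q i))^2"
      using a by (simp add: power_mono)
    also have "\<dots> \<le> real N * (\<Sum>k<N. ps i k * norm (q k - q i)^2)"
      using b c by (meson order_trans mult_left_mono of_nat_0_le_iff)
    finally have d: "norm (\<Sum>k<N. ps i k *\<^sub>R (q k - q i))^2 \<le> real N * (\<Sum>k<N. ps i k * norm (q k - q i)^2)" .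
    have "norm ((lam / real N) *\<^sub>R (\<Sum>k<N. ps i k *\<^sub>R (q k - q i)))^2
        = (lam / real N)^2 * norm (\<Sum>k<N. ps i k *\<^sub>R (q k - q i))^2"
      by (simp add: power_mult_distrib power_divide)
    also have "\<dots> \<le> (lam / real N)^2 * (real N * (\<Sum>k<N. ps i k * norm (q k - q i)^2))"
      using d by (simp add: mult_left_mono)
    also have "\<dots> = (lam^2 / real N) * (\<Sum>k<N. ps i k * norm (q k - q i)^2)"
      using N by (simp add: power2_eq_square field_simps)
    finally show ?thesis .
  qed
  show ?thesis
    by (rule order_trans[OF sum_mono[OF per]]) (simp add: sum_distrib_left)
qed


lemma key_alg:
  fixes w p f :: "nat \<Rightarrow> 'a::real_inner" and ps :: "nat \<Rightarrow> nat \<Rightarrow> real"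
  assumes N: "N \<ge> 1" and lam: "lam > 0" and sym: "\<And>i k. ps i k = ps k i"
    and p0: "\<And>i k. 0 \<le> ps i k" and p1: "\<And>i k. ps i k \<le> 1"
    and f: "\<And>i. f i = (lam / real N) *\<^sub>R (\<Sum>k<N. ps i k *\<^sub>R (p k - p i))"
  shows "(\<Sum>i<N. \<Sum>j<N. inner (w i - w j) (f i - f j))
     \<le> - lam * ((1/2) * (\<Sum>i<N. \<Sum>k<N. ps i k * norm (p k - p i)^2))
        + 2 * lam * real N * (\<Sum>i<N. norm (w i - p i)^2)"
proof -
  have s1: "(\<Sum>i<N. \<Sum>j<N. inner (w i - w j) (f i - f j))
     = 2 * real N * (\<Sum>i<N. inner (w i) (f i)) - 2 * inner (\<Sum>i<N. w i) (\<Sum>i<N. f i)"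
  proof -
    have e: "inner (w i - w j) (f i - f j) = inner (w i) (f i) + inner (w j) (f j) - inner (w i) (f j) - inner (w j) (f i)" for i j
      by (simp add: inner_diff_left inner_diff_right)
    have a: "(\<Sum>i<N. \<Sum>j<N. inner (w i) (f j)) = inner (\<Sum>i<N. w i) (\<Sum>i<N. f i)"
      by (simp add: inner_sum_left inner_sum_right sum.swap[of "\<lambda>x y. inner (w x) (f y)"])
    have b: "(\<Sum>i<N. \<Sum>j<N. inner (w j) (f i)) = inner (\<Sum>i<N. w i) (\<Sum>i<N. f i)"
      by (subst sum.swap) (rule a)
    show ?thesis unfolding e sum_subtractf sum.distrib a b by (simp add: sum_distrib_left mult.assoc)
  qed
  have s2: "(\<Sum>i<N. f i) = 0"
  proof -
    have "(\<Sum>i<N. \<Sum>k<N. ps i k *\<^sub>R p k) = (\<Sum>i<N. \<Sum>k<N. ps i k *\<^sub>R p i)"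
      by (subst sum.swap) (simp add: sym)
    then have "(\<Sum>i<N. \<Sum>k<N. ps i k *\<^sub>R (p k - p i)) = 0"
      by (simp add: scaleR_diff_right sum_subtractf)
    then show ?thesis by (simp add: f scaleR_sum_right[symmetric])
  qed
  have s3: "(\<Sum>i<N. inner (w i) (f i)) = (lam / real N) * (\<Sum>i<N. \<Sum>k<N. ps i k * inner (w i) (p k - p i))"
    by (simp add: f inner_sum_right sum_distrib_left)
  define T where "T = (\<Sum>i<N. \<Sum>k<N. ps i k * inner (p i) (p k - p i))"
  define S where "S = (\<Sum>i<N. \<Sum>k<N. ps i k * inner (w i - p i) (p k - p i))"
  define D where "D = (1/2) * (\<Sum>i<N. \<Sum>k<N. ps i k * norm (p k - p i)^2)"
  have s4: "T = - D"
  proof -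
    have T2: "T = (\<Sum>i<N. \<Sum>k<N. ps i k * inner (p k) (p i - p k))"
      unfolding T_def by (subst sum.swap) (simp add: sym)
    have "2 * T = (\<Sum>i<N. \<Sum>k<N. ps i k * inner (p i) (p k - p i)) + (\<Sum>i<N. \<Sum>k<N. ps i k * inner (p k) (p i - p k))"
      using T2 T_def by simp
    also have "\<dots> = (\<Sum>i<N. \<Sum>k<N. - (ps i k * norm (p k - p i)^2))"
      unfolding sum.distrib[symmetric]
      by (intro sum.cong refl) (simp add: power2_norm_eq_inner inner_diff_left inner_diff_right inner_commute algebra_simps)
    finally show ?thesis unfolding D_def by (simp add: sum_negf)
  qed
  have s5: "(\<Sum>i<N. \<Sum>k<N. ps i k * inner (w i) (p k - p i)) = T + S"
    unfolding T_def S_def sum.distrib[symmetric]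
    by (intro sum.cong refl) (simp add: inner_diff_left algebra_simps)
  have s6: "2 * S \<le> D + 2 * real N * (\<Sum>i<N. norm (w i - p i)^2)"
  proof -
    have pt: "2 * (ps i k * inner (w i - p i) (p k - p i)) \<le> (1/2) * (ps i k * norm (p k - p i)^2) + 2 * norm (w i - p i)^2" for i k
    proof -
      define a where "a = w i - p i"
      define y where "y = p k - p i"
      have "0 \<le> norm (2 *\<^sub>R a - y)^2" by simp
      also have "norm (2 *\<^sub>R a - y)^2 = 4 * norm a ^2 - 4 * inner a y + norm y ^2"
        by (simp add: power2_norm_eq_inner inner_diff_left inner_diff_right inner_commute algebra_simps)
      finally have q: "2 * inner a y \<le> (1/2) * norm y^2 + 2 * norm a^2" by simp
      have "2 * (ps i k * inner a y) = ps i k * (2 * inner a y)" by simp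
      also have "\<dots> \<le> ps i k * ((1/2) * norm y^2 + 2 * norm a^2)"
        using q p0[of i k] by (rule mult_left_mono)
      also have "\<dots> = (1/2) * (ps i k * norm y^2) + ps i k * (2 * norm a^2)" by (simp add: algebra_simps)
      also have "\<dots> \<le> (1/2) * (ps i k * norm y^2) + 2 * norm a^2"
        using mult_right_mono[OF p1[of i k], of "2 * norm a^2"] by simp
      finally show ?thesis unfolding a_def y_def .
    qed
    have "2 * S = (\<Sum>i<N. \<Sum>k<N. 2 * (ps i k * inner (w i - p i) (p k - p i)))"
      unfolding S_def by (simp add: sum_distrib_left)
    also have "\<dots> \<le> (\<Sum>i<N. \<Sum>k<N. (1/2) * (ps i k * norm (p k - p i)^2) + 2 * norm (w i - p i)^2)"
      by (intro sum_mono pt)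
    also have "\<dots> = D + 2 * real N * (\<Sum>i<N. norm (w i - p i)^2)"
      unfolding D_def by (simp add: sum.distrib sum_distrib_left mult.assoc mult.left_commute)
    finally show ?thesis .
  qed
  have "(\<Sum>i<N. \<Sum>j<N. inner (w i - w j) (f i - f j)) = 2 * real N * ((lam / real N) * (T + S))"
    using s1 s2 s3 s5 by simp
  also have "\<dots> = 2 * lam * (T + S)" using N by simp
  also have "\<dots> \<le> - lam * D + 2 * lam * real N * (\<Sum>i<N. norm (w i - p i)^2)"
  proof -
    have "lam * (2 * S) \<le> lam * (D + 2 * real N * (\<Sum>i<N. norm (w i - p i)^2))"
      using s6 lam by (intro mult_left_mono) auto
    then show ?thesis using s4 by (simp add: algebra_simps)
  qed
  finally show ?thesis unfolding D_def .
qed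


lemma norm_sq_deriv:
  fixes g :: "real \<Rightarrow> 'a::real_inner"
  assumes g: "(g has_vector_derivative g') (at u)"
  shows "((\<lambda>u. norm (g u)^2) has_real_derivative 2 * inner (g u) g') (at u)"
proof -
  have "((\<lambda>u. inner (g u) (g u)) has_derivative (\<lambda>h. inner (g u) (h *\<^sub>R g') + inner (h *\<^sub>R g') (g u))) (at u)"
    using has_derivative_inner[OF g[unfolded has_vector_derivative_def] g[unfolded has_vector_derivative_def]] .
  then have "((\<lambda>u. inner (g u) (g u)) has_derivative (\<lambda>h. (2 * inner (g u) g') * h)) (at u)"
    by (rule has_derivative_eq_rhs) (auto simp: inner_commute algebra_simps)
  then show ?thesis by (simp add: has_field_derivative_def power2_norm_eq_inner)
qed

lemma cont_shift:
  fixes g :: "real \<Rightarrow> 'a::topological_space"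
  assumes "continuous_on {-\<tau>..} g"
  shows "continuous_on {0..} (\<lambda>s. g (s - \<tau>))"
  by (rule continuous_on_compose2[OF assms]) (auto intro!: continuous_intros)

lemma cont_psi:
  fixes h :: "real \<Rightarrow> 'a::real_normed_vector"
  assumes "continuous_on {0..} \<psi>" "continuous_on S h"
  shows "continuous_on S (\<lambda>s. \<psi> (norm (h s)))"
  by (rule continuous_on_compose2[OF assms(1)]) (auto intro!: continuous_intros assms(2))


theorem lemma3p2:
  fixes N :: nat and lam \<tau> :: real and \<psi> :: "real \<Rightarrow> real"
    and x v :: "nat \<Rightarrow> real \<Rightarrow> real^'d"
  assumes N: "N \<ge> 1"
    and lam: "lam > 0" and tau: "\<tau> > 0" and small: "lam * \<tau> \<le> 1/2"
    and psi_pos: "\<And>r. r \<ge> 0 \<Longrightarrow> \<psi> r > 0"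
    and psi_le1: "\<And>r. r \<ge> 0 \<Longrightarrow> \<psi> r \<le> 1"
    and psi_noninc: "\<And>r s. 0 \<le> r \<Longrightarrow> r \<le> s \<Longrightarrow> \<psi> s \<le> \<psi> r"
    and psi_diff: "\<And>r. r \<ge> 0 \<Longrightarrow> \<psi> differentiable (at r within {0..})"
    and x_cont: "\<And>i. i < N \<Longrightarrow> continuous_on {-\<tau>..} (x i)"
    and v_cont: "\<And>i. i < N \<Longrightarrow> continuous_on {-\<tau>..} (v i)"
    and init_C1: "\<And>i. i < N \<Longrightarrow>
       (\<forall>t\<in>{-\<tau><..<0}. x i differentiable (at t) \<and> v i differentiable (at t))
       \<and> continuous_on {-\<tau><..<0} (\<lambda>t. vector_derivative (x i) (at t))
       \<and> continuous_on {-\<tau><..<0} (\<lambda>t. vector_derivative (v i) (at t))"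
    and ode_x: "\<And>i t. i < N \<Longrightarrow> t > 0 \<Longrightarrow> (x i has_vector_derivative v i t) (at t)"
    and ode_v: "\<And>i t. i < N \<Longrightarrow> t > 0 \<Longrightarrow>
       (v i has_vector_derivative
          (lam / real N) *\<^sub>R (\<Sum>j<N. \<psi> (norm (x i (t - \<tau>) - x j (t - \<tau>)))
                                  *\<^sub>R (v j (t - \<tau>) - v i (t - \<tau>)))) (at t)"
    and t: "t \<ge> \<tau>"
  shows "Lfun N lam \<tau> \<psi> x v t \<le> Lfun N lam \<tau> \<psi> x v \<tau>"
proof (cases "t = \<tau>")
  case True then show ?thesis by simp
next
  case False
  with t have tt: "\<tau> < t" by simp
  define Dt where "Dt = Dtilde N \<tau> \<psi> x v"
  define ps where "ps = (\<lambda>s i k. \<psi> (norm (x i (s - \<tau>) - x k (s - \<tau>))))"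
  define F where "F = (\<lambda>i s. (lam / real N) *\<^sub>R (\<Sum>k<N. ps s i k *\<^sub>R (v k (s - \<tau>) - v i (s - \<tau>))))"
  have Dt_eq: "Dt s = (1/2) * (\<Sum>i<N. \<Sum>k<N. ps s i k * norm (v k (s - \<tau>) - v i (s - \<tau>))^2)" for s
    unfolding Dt_def Dtilde_def Dfun_def ps_def ..
  have psc: "continuous_on {0..} \<psi>"
    by (rule differentiable_imp_continuous_on) (simp add: differentiable_on_def psi_diff)
  have xs: "continuous_on {0..} (\<lambda>s. x i (s - \<tau>))" if "i < N" for i
    using cont_shift[OF x_cont[OF that]] .
  have vs: "continuous_on {0..} (\<lambda>s. v i (s - \<tau>))" if "i < N" for i
    using cont_shift[OF v_cont[OF that]] .
  have psc2: "continuous_on {0..} (\<lambda>s. ps s i k)" if "i < N" "k < N" for i k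
    unfolding ps_def by (intro cont_psi[OF psc] continuous_intros xs that)
  have Dtc: "continuous_on {0..} Dt"
    unfolding Dt_eq by (intro continuous_intros psc2 vs) auto
  have Fc: "continuous_on {0..} (F i)" if "i < N" for i
    unfolding F_def by (intro continuous_intros psc2 vs that) auto
  have ps0: "0 \<le> ps s i k" for s i k
    unfolding ps_def using psi_pos[of "norm (x i (s - \<tau>) - x k (s - \<tau>))"] by simp
  have ps1: "ps s i k \<le> 1" for s i k
    unfolding ps_def using psi_le1[of "norm (x i (s - \<tau>) - x k (s - \<tau>))"] by simp
  have pssym: "ps s i k = ps s k i" for s i k
    unfolding ps_def by (simp add: norm_minus_commute)
  have Dt0: "0 \<le> Dt s" for s
    unfolding Dt_eq by (intro mult_nonneg_nonneg sum_nonneg ps0) auto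
  define b where "b = t + 1"
  define E where "E = (\<lambda>u. integral {0..u} Dt)"
  define P where "P = (\<lambda>u. integral {0..u} E)"
  have Dtcb: "continuous_on {0..b} Dt" using Dtc by (rule continuous_on_subset) auto
  have dE: "(E has_real_derivative Dt u) (at u within {0..b})" if "u \<in> {0..b}" for u
    unfolding E_def by (rule integral_has_real_derivative[OF Dtcb that])
  have Ec: "continuous_on {0..b} E" using dE by (rule DERIV_continuous_on)
  have dP: "(P has_real_derivative E u) (at u within {0..b})" if "u \<in> {0..b}" for u
    unfolding P_def by (rule integral_has_real_derivative[OF Ec that])
  have Pc: "continuous_on {0..b} P" using dP by (rule DERIV_continuous_on)
  have Dt_int: "integral {c..d} Dt = E d - E c" if "0 \<le> c" "c \<le> d" "d \<le> b" for c d
  proof -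
    have "Dt integrable_on {0..d}" using Dtcb that
      by (intro integrable_continuous_interval) (auto elim: continuous_on_subset)
    then show ?thesis unfolding E_def using Henstock_Kurzweil_Integration.integral_combine[where a=0 and c=c and b=d and f=Dt] that by simp
  qed
  have E_int: "integral {c..d} E = P d - P c" if "0 \<le> c" "c \<le> d" "d \<le> b" for c d
  proof -
    have "E integrable_on {0..d}" using Ec that
      by (intro integrable_continuous_interval) (auto elim: continuous_on_subset)
    then show ?thesis unfolding P_def using Henstock_Kurzweil_Integration.integral_combine[where a=0 and c=c and b=d and f=E] that by simp
  qed
  have Ecb: "E integrable_on {c..d}" if "0 \<le> c" "d \<le> b" for c d
    using Ec that by (intro integrable_continuous_interval) (auto elim: continuous_on_subset)
  define G where "G = (\<lambda>u. Vfun N v u + 4 * \<tau> * lam ^ 3 * (\<tau> * E u - (P u - P (u - \<tau>))))"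
  have LG: "Lfun N lam \<tau> \<psi> x v u = G u" if "\<tau> \<le> u" "u \<le> t" for u
  proof -
    have "integral {u - \<tau>..u} (\<lambda>\<theta>. integral {\<theta>..u} Dt) = integral {u - \<tau>..u} (\<lambda>\<theta>. E u - E \<theta>)"
      by (intro integral_cong Dt_int) (use that tau in \<open>auto simp: b_def\<close>)
    also have "\<dots> = \<tau> * E u - (P u - P (u - \<tau>))"
    proof -
      have i1: "(\<lambda>\<theta>. E u) integrable_on {u - \<tau>..u}" by (intro integrable_continuous_interval continuous_on_const)
      have i2: "E integrable_on {u - \<tau>..u}" using that tau by (intro Ecb) (auto simp: b_def)
      have "integral {u - \<tau>..u} (\<lambda>\<theta>. E u - E \<theta>) = integral {u - \<tau>..u} (\<lambda>\<theta>. E u) - integral {u - \<tau>..u} E"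
        using integral_diff[OF i1 i2] by simp
      also have "\<dots> = \<tau> * E u - (P u - P (u - \<tau>))"
        using that tau by (subst E_int) (auto simp: b_def)
      finally show ?thesis .
    qed
    finally show ?thesis unfolding Lfun_def G_def Dt_def by simp
  qed
  have "G t \<le> G \<tau>"
  proof (rule DERIV_nonpos_imp_decreasing_open[OF t])
    show "continuous_on {\<tau>..t} G"
    proof -
      have Vc: "continuous_on {\<tau>..t} (Vfun N v)"
        unfolding Vfun_def
        by (intro continuous_intros continuous_on_subset[OF v_cont]) (use tau in auto)
      have "continuous_on {\<tau>..t} E" using Ec by (rule continuous_on_subset) (use tau in \<open>auto simp: b_def\<close>)
      moreover have "continuous_on {\<tau>..t} P" using Pc by (rule continuous_on_subset) (use tau in \<open>auto simp: b_def\<close>)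
      moreover have "continuous_on {\<tau>..t} (\<lambda>u. P (u - \<tau>))"
        by (rule continuous_on_compose2[OF Pc]) (use tau in \<open>auto intro!: continuous_intros simp: b_def\<close>)
      ultimately show ?thesis unfolding G_def using Vc by (intro continuous_intros) auto
    qed
  next
    fix u assume u: "\<tau> < u" "u < t"
    have u0: "0 < u" using u tau by simp
    have atb: "at y within {0..b} = at y" if "0 < y" "y < b" for y
      using at_within_Icc_at[OF that] .
    have dEu: "(E has_real_derivative Dt u) (at u)" using dE[of u] atb[of u] u tau by (simp add: b_def)
    have dEu': "(E has_real_derivative Dt (u - \<tau>)) (at (u - \<tau>))" using dE[of "u - \<tau>"] atb[of "u - \<tau>"] u tau by (simp add: b_def)
    have dPu: "(P has_real_derivative E u) (at u)" using dP[of u] atb[of u] u tau by (simp add: b_def)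
    have dPu': "((\<lambda>u. P (u - \<tau>)) has_real_derivative E (u - \<tau>)) (at u)"
    proof -
      have "(P has_real_derivative E (u - \<tau>)) (at (u - \<tau>))" using dP[of "u - \<tau>"] atb[of "u - \<tau>"] u tau by (simp add: b_def)
      moreover have "((\<lambda>u. u - \<tau>) has_real_derivative 1) (at u)"
        by (auto intro!: derivative_eq_intros)
      ultimately show ?thesis using DERIV_chain2[where f=P and g="\<lambda>u. u - \<tau>" and x=u and s=UNIV] by fastforce
    qed
    define V' where "V' = (\<Sum>i<N. \<Sum>j<N. inner (v i u - v j u) (F i u - F j u))"
    have dV: "(Vfun N v has_real_derivative V') (at u)"
    proof -
      have "((\<lambda>u. (1/2) * (\<Sum>i<N. \<Sum>j<N. norm (v i u - v j u)^2)) has_real_derivative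
          (1/2) * (\<Sum>i<N. \<Sum>j<N. 2 * inner (v i u - v j u) (F i u - F j u))) (at u)"
        apply (intro DERIV_cmult DERIV_sum norm_sq_deriv has_vector_derivative_diff)
        using ode_v u0 by (auto simp: F_def ps_def)
      then show ?thesis unfolding Vfun_def V'_def by (simp add: sum_distrib_left)
    qed
    have dG: "(G has_real_derivative V' + 4 * \<tau> * lam ^ 3 * (\<tau> * Dt u - (E u - E (u - \<tau>)))) (at u)"
      unfolding G_def
      using DERIV_add[OF dV DERIV_cmult[OF DERIV_diff[OF DERIV_cmult[OF dEu] DERIV_diff[OF dPu dPu']]], of "4 * \<tau> * lam ^ 3" \<tau>]
      by simp
    define I where "I = E u - E (u - \<tau>)"
    have I_eq: "I = integral {u - \<tau>..u} Dt" unfolding I_def using u tau by (subst Dt_int) (auto simp: b_def)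
    have key: "V' \<le> - lam * Dt u + 2 * lam * real N * (\<Sum>i<N. norm (v i u - v i (u - \<tau>))^2)"
      unfolding V'_def Dt_eq
      by (rule key_alg[OF N lam pssym ps0 ps1]) (simp add: F_def)
    have aint: "(F i has_integral (v i u - v i (u - \<tau>))) {u - \<tau>..u}" if "i < N" for i
    proof (rule fundamental_theorem_of_calculus)
      show "u - \<tau> \<le> u" using tau by simp
      fix s assume s: "s \<in> {u - \<tau>..u}"
      then have "s > 0" using u by auto
      then show "(v i has_vector_derivative F i s) (at s within {u - \<tau>..u})"
        using ode_v[OF that] by (auto simp: F_def ps_def intro: has_vector_derivative_at_within)
    qed
    have Fcu: "continuous_on {u - \<tau>..u} (F i)" if "i < N" for i
      using Fc[OF that] by (rule continuous_on_subset) (use u in auto)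
    have Fsq_int: "(\<lambda>s. norm (F i s)^2) integrable_on {u - \<tau>..u}" if "i < N" for i
      by (intro integrable_continuous_interval continuous_intros Fcu that)
    have Dt_intu: "Dt integrable_on {u - \<tau>..u}"
      using Dtc by (intro integrable_continuous_interval) (rule continuous_on_subset, use u tau in auto)
    have abound: "(\<Sum>i<N. norm (v i u - v i (u - \<tau>))^2) \<le> (2 * \<tau> * lam^2 / real N) * I"
    proof -
      have "(\<Sum>i<N. norm (v i u - v i (u - \<tau>))^2) \<le> (\<Sum>i<N. \<tau> * integral {u - \<tau>..u} (\<lambda>s. norm (F i s)^2))"
        by (intro sum_mono) (use int_sq_bound[OF _ aint Fsq_int] tau in auto)
      also have "\<dots> = \<tau> * integral {u - \<tau>..u} (\<lambda>s. \<Sum>i<N. norm (F i s)^2)"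
      proof -
        have "integral {u - \<tau>..u} (\<lambda>s. \<Sum>i<N. norm (F i s)^2) = (\<Sum>i<N. integral {u - \<tau>..u} (\<lambda>s. norm (F i s)^2))"
          by (rule Henstock_Kurzweil_Integration.integral_sum) (auto intro: Fsq_int)
        then show ?thesis by (simp add: sum_distrib_left)
      qed
      also have "\<dots> \<le> \<tau> * integral {u - \<tau>..u} (\<lambda>s. (2 * lam^2 / real N) * Dt s)"
      proof (intro mult_left_mono integral_le)
        show "(\<lambda>s. \<Sum>i<N. norm (F i s)^2) integrable_on {u - \<tau>..u}"
          by (intro integrable_sum Fsq_int) auto
        show "(\<lambda>s. (2 * lam^2 / real N) * Dt s) integrable_on {u - \<tau>..u}"
          by (intro integrable_on_mult_right Dt_intu)
        fix s
        show "(\<Sum>i<N. norm (F i s)^2) \<le> (2 * lam^2 / real N) * Dt s"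
          using F_bound[OF N, where ps="ps s" and q="\<lambda>k. v k (s - \<tau>)" and lam=lam] ps0 ps1
          unfolding Dt_eq F_def by simp
      qed (use tau in auto)
      also have "\<dots> = (2 * \<tau> * lam^2 / real N) * I"
        unfolding I_eq by simp
      finally show ?thesis .
    qed
    have "V' \<le> - lam * Dt u + 4 * \<tau> * lam^3 * I"
    proof -
      have "2 * lam * real N * (\<Sum>i<N. norm (v i u - v i (u - \<tau>))^2) \<le> 2 * lam * real N * ((2 * \<tau> * lam^2 / real N) * I)"
        using abound lam by (intro mult_left_mono) auto
      also have "\<dots> = 4 * \<tau> * lam^3 * I" using N by (simp add: power2_eq_square power3_eq_cube)
      finally show ?thesis using key by linarith
    qed
    moreover have "4 * \<tau>^2 * lam^3 \<le> lam"
    proof -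
      have "(lam * \<tau>)^2 \<le> (1/2)^2" using small lam tau by (intro power_mono) auto
      then have "4 * (lam * \<tau>)^2 \<le> 1" by (simp add: power_divide)
      then have "lam * (4 * (lam * \<tau>)^2) \<le> lam * 1" using lam by (intro mult_left_mono) auto
      then show ?thesis by (simp add: power2_eq_square power3_eq_cube algebra_simps)
    qed
    moreover have "0 \<le> Dt u" by (rule Dt0)
    ultimately have "V' + 4 * \<tau> * lam ^ 3 * (\<tau> * Dt u - (E u - E (u - \<tau>))) \<le> 0"
    proof -
      assume a: "V' \<le> - lam * Dt u + 4 * \<tau> * lam^3 * I" and b: "4 * \<tau>^2 * lam^3 \<le> lam" and c: "0 \<le> Dt u"
      have "V' + 4 * \<tau> * lam ^ 3 * (\<tau> * Dt u - I) \<le> (4 * \<tau>^2 * lam^3 - lam) * Dt u"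
        using a by (simp add: algebra_simps power2_eq_square)
      also have "\<dots> \<le> 0" using b c by (simp add: mult_nonpos_nonneg)
      finally show ?thesis by (simp add: I_def)
    qed
    with dG show "\<exists>y. (G has_real_derivative y) (at u) \<and> y \<le> 0" by blast
  qed
  then show ?thesis using LG[of t] LG[of \<tau>] t by simp
qed

end
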